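(* Let $H=\sum_{k=1}^{m}\mathbb{Z}u_{k}$ with $u_k\in\mathbb{R}^n$, and suppose $u_1,\dots,u_p$ is a basis of $\mathrm{vect}(H)$, where $p\leq m<n$. Let $v_{p+1},\dots,v_n\in\mathbb{R}^n$ be such that $(u_1,\dots,u_p,v_{p+1},\dots,v_n)$ is a basis of $\mathbb{R}^n$. Then for every $1\leq r\leq n-m$, setting $H'=H+\sum_{k=1}^{r}\mathbb{Z}v_{p+k}$, one has $L(M_H)=L(M_{H'})$, where $M_H$ is computed from the ordered generating family $(u_1,\dots,u_m)$ and $M_{H'}$ from the ordered family $(u_1,\dots,u_p,v_{p+1},\dots,v_{p+r},u_{p+1},\dots,u_m)$. In particular $\Re(\widetilde{\mathrm{dim}}(\overline{H}))=\Re(\widetilde{\mathrm{dim}}(\overline{H'}))$.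
   Context: $\mathrm{vect}(A)$ is the real span of $A$; bars denote closure. Complex dimension: for an additive subgroup $G$ of $\mathbb{R}^n$, $\widetilde{\mathrm{dim}}(G):=p+i(s-p)$, $p=\max\{\dim V: V\text{ a vector subspace},\ V\subset G\}$, $s=\dim\mathrm{vect}(G)$. Definition of $L(M_G)$ for an ordered generating family $w_1,\dots,w_m$ of $G$ whose first $q$ members form a basis of $\mathrm{vect}(G)$: for $k=q+1,\dots,m$ write $w_k=\sum_{j=1}^q\alpha_{k,j}w_j$. Choose $I_k\subset\{1,\dots,q\}$ such that $\{1\}\cup\{\alpha_{k,i}:i\in I_k\}$ is a longest sublist of $1,\alpha_{k,1},\dots,\alpha_{k,q}$ linearly independent over $\mathbb{Q}$. For $j\notin I_k$ write $\alpha_{k,j}=t_{k,j}+\sum_{i\in I_k}\gamma^{(k)}_{j,i}\alpha_{k,i}$ with rational $t_{k,j},\gamma^{(k)}_{j,i}$. Choose $N\in\mathbb{N}^*$ with $m^{(k)}_{i,j}:=N\gamma^{(k)}_{i,j}\in\mathbb{Z}$, and put $w'_{k,j}=Nw_j+\sum_{i\notin I_k}m^{(k)}_{i,j}w_i$ for $j\in I_k$. $M_G$ is the matrix with columns all $w'_{k,j}$, and $L(M_G)=\mathrm{rank}(M_G)$. *)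

theory Defs
  imports "HOL-Analysis.Analysis"
begin

definition zgen :: "(nat \<Rightarrow> 'a::real_vector) \<Rightarrow> nat \<Rightarrow> 'a set" where
  "zgen w m = {(\<Sum>k\<in>{1..m}. of_int (c k) *\<^sub>R w k) | c :: nat \<Rightarrow> int. True}"

definition setplus :: "'a::plus set \<Rightarrow> 'a set \<Rightarrow> 'a set" where
  "setplus A B = {x + y | x y. x \<in> A \<and> y \<in> B}"

definition rat_indep :: "nat set \<Rightarrow> (nat \<Rightarrow> real) \<Rightarrow> bool" where
  "rat_indep S f \<longleftrightarrow>
     (\<forall>c :: nat \<Rightarrow> rat. (\<Sum>i\<in>S. of_rat (c i) * f i) = 0 \<longrightarrow> (\<forall>i\<in>S. c i = 0))"

definition gen_q :: "(nat \<Rightarrow> 'a::euclidean_space) \<Rightarrow> nat \<Rightarrow> nat" where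
  "gen_q w m = dim (span (w ` {1..m}))"

definition alpha :: "(nat \<Rightarrow> 'a::euclidean_space) \<Rightarrow> nat \<Rightarrow> nat \<Rightarrow> nat \<Rightarrow> real" where
  "alpha w q k = (SOME a. w k = (\<Sum>j\<in>{1..q}. a j *\<^sub>R w j))"

definition alist :: "(nat \<Rightarrow> 'a::euclidean_space) \<Rightarrow> nat \<Rightarrow> nat \<Rightarrow> nat \<Rightarrow> real" where
  "alist w q k i = (if i = 0 then 1 else alpha w q k i)"

definition good_I :: "(nat \<Rightarrow> 'a::euclidean_space) \<Rightarrow> nat \<Rightarrow> nat \<Rightarrow> nat set \<Rightarrow> bool" where
  "good_I w q k I \<longleftrightarrow> I \<subseteq> {1..q} \<and> rat_indep (insert 0 I) (alist w q k) \<and>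
     (\<forall>J. J \<subseteq> {1..q} \<and> rat_indep (insert 0 J) (alist w q k) \<longrightarrow> card J \<le> card I)"

definition Ik :: "(nat \<Rightarrow> 'a::euclidean_space) \<Rightarrow> nat \<Rightarrow> nat \<Rightarrow> nat set" where
  "Ik w q k = (SOME I. good_I w q k I)"

definition tgamma :: "(nat \<Rightarrow> 'a::euclidean_space) \<Rightarrow> nat \<Rightarrow> nat \<Rightarrow> nat \<Rightarrow> rat \<times> (nat \<Rightarrow> rat)" where
  "tgamma w q k j = (SOME (t, g). alpha w q k j =
        of_rat t + (\<Sum>i\<in>Ik w q k. of_rat (g i) * alpha w q k i))"

definition gamma :: "(nat \<Rightarrow> 'a::euclidean_space) \<Rightarrow> nat \<Rightarrow> nat \<Rightarrow> nat \<Rightarrow> nat \<Rightarrow> rat" where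
  "gamma w q k j i = snd (tgamma w q k j) i"

definition Nk :: "(nat \<Rightarrow> 'a::euclidean_space) \<Rightarrow> nat \<Rightarrow> nat \<Rightarrow> nat" where
  "Nk w q k = (SOME N. N > 0 \<and>
      (\<forall>j\<in>{1..q} - Ik w q k. \<forall>i\<in>Ik w q k. of_nat N * gamma w q k j i \<in> \<int>))"

definition mk :: "(nat \<Rightarrow> 'a::euclidean_space) \<Rightarrow> nat \<Rightarrow> nat \<Rightarrow> nat \<Rightarrow> nat \<Rightarrow> rat" where
  "mk w q k i j = of_nat (Nk w q k) * gamma w q k i j"

definition wprime :: "(nat \<Rightarrow> 'a::euclidean_space) \<Rightarrow> nat \<Rightarrow> nat \<Rightarrow> nat \<Rightarrow> 'a" where
  "wprime w q k j = real (Nk w q k) *\<^sub>R w j +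
      (\<Sum>i\<in>{1..q} - Ik w q k. of_rat (mk w q k i j) *\<^sub>R w i)"

definition M_cols :: "(nat \<Rightarrow> 'a::euclidean_space) \<Rightarrow> nat \<Rightarrow> 'a set" where
  "M_cols w m = (let q = gen_q w m in
      {wprime w q k j | k j. k \<in> {q+1..m} \<and> j \<in> Ik w q k})"

definition L_M :: "(nat \<Rightarrow> 'a::euclidean_space) \<Rightarrow> nat \<Rightarrow> nat" where
  "L_M w m = dim (span (M_cols w m))"

definition cdim :: "'a::euclidean_space set \<Rightarrow> complex" where
  "cdim G = (let p = (GREATEST d. \<exists>V. subspace V \<and> V \<subseteq> G \<and> dim V = d);
                 s = dim (span G)
             in Complex (real p) (real s - real p))"

end

theory Submission
  imports Defs
begin


lemma rat_indep_cong:
  assumes "\<And>i. i \<in> S \<Longrightarrow> f i = g i"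
  shows "rat_indep S f = rat_indep S g"
proof -
  have "\<And>c. (\<Sum>i\<in>S. of_rat (c i) * f i) = (\<Sum>i\<in>S. of_rat (c i) * g i)"
    by (rule sum.cong) (auto simp: assms)
  then show ?thesis unfolding rat_indep_def by simp
qed

lemma rat_indep_zero:
  assumes "finite S" "i \<in> S" "f i = 0"
  shows "\<not> rat_indep S f"
proof
  assume R: "rat_indep S f"
  define c :: "nat \<Rightarrow> rat" where "c = (\<lambda>x. if x = i then 1 else 0)"
  have "(\<Sum>x\<in>S. of_rat (c x) * f x) = (\<Sum>x\<in>S. if x = i then f i else 0)"
    by (rule sum.cong) (auto simp: c_def)
  also have "\<dots> = 0" using assms by simp
  finally have "c i = 0" using R assms unfolding rat_indep_def by blast
  then show False by (simp add: c_def)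
qed

lemma good_I_ex: "\<exists>I. good_I w q k I"
proof -
  let ?P = "\<lambda>J. J \<subseteq> {1..q} \<and> rat_indep (insert 0 J) (alist w q k)"
  have P0: "?P {}" unfolding rat_indep_def alist_def by simp
  have "\<forall>J. ?P J \<longrightarrow> card J < q + 1"
  proof (intro allI impI)
    fix J assume "?P J"
    then have "card J \<le> card {1..q}" by (intro card_mono) auto
    then show "card J < q + 1" by simp
  qed
  from ex_has_greatest_nat[of ?P "{}" card "q+1", OF P0 this]
  obtain I where "?P I" "\<forall>J. ?P J \<longrightarrow> card J \<le> card I" by blast
  then show ?thesis unfolding good_I_def by blast
qed

lemma Ik_good: "good_I w q k (Ik w q k)"
  unfolding Ik_def using good_I_ex by (rule someI_ex)

lemma k_transfer:
  fixes u w2 :: "nat \<Rightarrow> 'a::euclidean_space"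
  assumes hA: "\<And>j. j \<in> {1..p+s} \<Longrightarrow> alpha w2 (p+s) k2 j = (if j \<le> p then alpha u p k j else 0)"
    and hw: "\<And>j. j \<in> {1..p} \<Longrightarrow> w2 j = u j"
  shows "Ik w2 (p+s) k2 = Ik u p k \<and> (\<forall>j\<in>Ik u p k. wprime w2 (p+s) k2 j = wprime u p k j)"
proof -
  let ?A = "alist u p k" and ?A2 = "alist w2 (p+s) k2"
  have hAl: "?A2 i = (if i \<le> p then ?A i else 0)" if "i \<le> p+s" for i
    using hA[of i] that by (cases "i = 0") (auto simp: alist_def)
  have C: "(J \<subseteq> {1..p+s} \<and> rat_indep (insert 0 J) ?A2) \<longleftrightarrow> (J \<subseteq> {1..p} \<and> rat_indep (insert 0 J) ?A)" for J
  proof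
    assume a: "J \<subseteq> {1..p+s} \<and> rat_indep (insert 0 J) ?A2"
    have fin: "finite (insert 0 J)" using a finite_subset by auto
    have "J \<subseteq> {1..p}"
    proof
      fix i assume i: "i \<in> J"
      show "i \<in> {1..p}"
      proof (rule ccontr)
        assume "i \<notin> {1..p}"
        then have z0: "?A2 i = 0" using hAl[of i] i a by auto
        show False using rat_indep_zero[OF fin, of i ?A2] z0 i a by auto
      qed
    qed
    moreover have "rat_indep (insert 0 J) ?A"
      using a calculation by (subst rat_indep_cong[where g = ?A2]) (auto simp: hAl)
    ultimately show "J \<subseteq> {1..p} \<and> rat_indep (insert 0 J) ?A" by blast
  next
    assume a: "J \<subseteq> {1..p} \<and> rat_indep (insert 0 J) ?A"
    have "rat_indep (insert 0 J) ?A2"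
      using a by (subst rat_indep_cong[where g = ?A]) (auto simp: hAl)
    then show "J \<subseteq> {1..p+s} \<and> rat_indep (insert 0 J) ?A2" using a by auto
  qed
  have D: "good_I w2 (p+s) k2 = good_I u p k"
  proof
    fix I show "good_I w2 (p+s) k2 I = good_I u p k I"
    proof -
      have "good_I w2 (p+s) k2 I = ((I \<subseteq> {1..p+s} \<and> rat_indep (insert 0 I) ?A2) \<and>
          (\<forall>J. (J \<subseteq> {1..p+s} \<and> rat_indep (insert 0 J) ?A2) \<longrightarrow> card J \<le> card I))"
        unfolding good_I_def by simp
      also have "\<dots> = ((I \<subseteq> {1..p} \<and> rat_indep (insert 0 I) ?A) \<and>
          (\<forall>J. (J \<subseteq> {1..p} \<and> rat_indep (insert 0 J) ?A) \<longrightarrow> card J \<le> card I))"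
        by (simp only: C)
      also have "\<dots> = good_I u p k I" unfolding good_I_def by simp
      finally show ?thesis .
    qed
  qed
  have IkE: "Ik w2 (p+s) k2 = Ik u p k" unfolding Ik_def D ..
  define I where "I = Ik u p k"
  have gI: "good_I u p k I" unfolding I_def by (rule Ik_good)
  then have Isub: "I \<subseteq> {1..p}" and Iind: "rat_indep (insert 0 I) ?A"
    unfolding good_I_def by auto
  have finI: "finite I" using Isub finite_subset by auto
  have tg: "tgamma w2 (p+s) k2 j = tgamma u p k j" if j: "j \<in> {1..p}" for j
  proof -
    have "\<And>t g. (alpha w2 (p+s) k2 j = of_rat t + (\<Sum>i\<in>Ik w2 (p+s) k2. of_rat (g i) * alpha w2 (p+s) k2 i))
       = (alpha u p k j = of_rat t + (\<Sum>i\<in>Ik u p k. of_rat (g i) * alpha u p k i))"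
    proof -
      fix t g
      have "(\<Sum>i\<in>Ik w2 (p+s) k2. of_rat (g i) * alpha w2 (p+s) k2 i) = (\<Sum>i\<in>Ik u p k. of_rat (g i) * alpha u p k i)"
        unfolding IkE by (rule sum.cong) (use Isub hA in \<open>auto simp: I_def\<close>)
      moreover have "alpha w2 (p+s) k2 j = alpha u p k j" using hA[of j] j by auto
      ultimately show "?thesis t g" by simp
    qed
    then show ?thesis unfolding tgamma_def by simp
  qed
  have g0: "gamma w2 (p+s) k2 j i = 0" if j: "j \<in> {p+1..p+s}" and i: "i \<in> I" for j i
  proof -
    let ?P = "\<lambda>(t, g). alpha w2 (p+s) k2 j = of_rat t + (\<Sum>i\<in>Ik w2 (p+s) k2. of_rat (g i) * alpha w2 (p+s) k2 i)"
    have aj: "alpha w2 (p+s) k2 j = 0" using hA[of j] j by auto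
    have "?P (0, \<lambda>_. 0)" using aj by simp
    then have "?P (tgamma w2 (p+s) k2 j)" unfolding tgamma_def by (rule someI)
    moreover obtain t g where tg: "tgamma w2 (p+s) k2 j = (t, g)" by fastforce
    ultimately have eq0: "0 = of_rat t + (\<Sum>i\<in>I. of_rat (g i) * alpha w2 (p+s) k2 i)"
      using aj IkE unfolding I_def by simp
    have "(\<Sum>i\<in>I. of_rat (g i) * alpha w2 (p+s) k2 i) = (\<Sum>i\<in>I. of_rat (g i) * ?A i)"
    proof (rule sum.cong)
      fix i assume "i \<in> I"
      then have "i \<in> {1..p}" using Isub by auto
      then show "of_rat (g i) * alpha w2 (p+s) k2 i = of_rat (g i) * ?A i"
        using hA[of i] by (auto simp: alist_def)
    qed simp
    with eq0 have eq: "0 = of_rat t + (\<Sum>i\<in>I. of_rat (g i) * ?A i)" by simp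
    define c where "c = (\<lambda>x. if x = 0 then t else g x)"
    have z: "0 \<notin> I" using Isub by auto
    have "(\<Sum>x\<in>insert 0 I. of_rat (c x) * ?A x) = of_rat t * ?A 0 + (\<Sum>x\<in>I. of_rat (c x) * ?A x)"
      using finI z by (simp add: c_def)
    also have "(\<Sum>x\<in>I. of_rat (c x) * ?A x) = (\<Sum>x\<in>I. of_rat (g x) * ?A x)"
      by (rule sum.cong) (use z in \<open>auto simp: c_def\<close>)
    finally have "(\<Sum>x\<in>insert 0 I. of_rat (c x) * ?A x) = 0" using eq by (simp add: alist_def)
    then have "c i = 0" using Iind i unfolding rat_indep_def by blast
    moreover have "i \<noteq> 0" using z i by metis
    ultimately have "g i = 0" by (simp add: c_def)
    then show ?thesis using tg by (simp add: gamma_def)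
  qed
  have gE: "gamma w2 (p+s) k2 j i = gamma u p k j i" if "j \<in> {1..p}" for j i
    using tg[OF that] by (simp add: gamma_def)
  have splitq: "{1..p+s} - I = ({1..p} - I) \<union> {p+1..p+s}" using Isub by auto
  have NkE: "Nk w2 (p+s) k2 = Nk u p k"
  proof -
    have "(\<forall>j\<in>{1..p+s} - Ik w2 (p+s) k2. \<forall>i\<in>Ik w2 (p+s) k2. of_nat N * gamma w2 (p+s) k2 j i \<in> \<int>)
      = (\<forall>j\<in>{1..p} - Ik u p k. \<forall>i\<in>Ik u p k. of_nat N * gamma u p k j i \<in> \<int>)" for N
    proof -
      have B: "(\<forall>j\<in>{p+1..p+s}. \<forall>i\<in>I. of_nat N * gamma w2 (p+s) k2 j i \<in> \<int>)"
        using g0 by simp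
      have A: "(\<forall>j\<in>{1..p} - I. \<forall>i\<in>I. of_nat N * gamma w2 (p+s) k2 j i \<in> \<int>)
         = (\<forall>j\<in>{1..p} - I. \<forall>i\<in>I. of_nat N * gamma u p k j i \<in> \<int>)"
      proof (rule ball_cong[OF refl])
        fix j assume "j \<in> {1..p} - I"
        then have "j \<in> {1..p}" by blast
        note gj = gE[OF this]
        show "(\<forall>i\<in>I. of_nat N * gamma w2 (p+s) k2 j i \<in> \<int>) = (\<forall>i\<in>I. of_nat N * gamma u p k j i \<in> \<int>)"
          unfolding gj ..
      qed
      have "(\<forall>j\<in>{1..p+s} - Ik w2 (p+s) k2. \<forall>i\<in>Ik w2 (p+s) k2. of_nat N * gamma w2 (p+s) k2 j i \<in> \<int>)
         = (\<forall>j\<in>({1..p} - I) \<union> {p+1..p+s}. \<forall>i\<in>I. of_nat N * gamma w2 (p+s) k2 j i \<in> \<int>)"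
        unfolding IkE I_def[symmetric] splitq ..
      also have "\<dots> = (\<forall>j\<in>{1..p} - I. \<forall>i\<in>I. of_nat N * gamma u p k j i \<in> \<int>)"
        unfolding ball_Un A using B by blast
      finally show ?thesis unfolding I_def .
    qed
    then show ?thesis unfolding Nk_def by simp
  qed
  have "wprime w2 (p+s) k2 j = wprime u p k j" if j: "j \<in> I" for j
  proof -
    have jp: "j \<in> {1..p}" using j Isub by auto
    let ?f = "\<lambda>i. of_rat (mk w2 (p+s) k2 i j) *\<^sub>R w2 i"
    have e1: "(\<Sum>i\<in>{1..p+s} - Ik w2 (p+s) k2. ?f i) = (\<Sum>i\<in>({1..p} - I) \<union> {p+1..p+s}. ?f i)"
      unfolding IkE I_def[symmetric] splitq ..
    have e2: "(\<Sum>i\<in>({1..p} - I) \<union> {p+1..p+s}. ?f i) = (\<Sum>i\<in>{1..p} - I. ?f i) + (\<Sum>i\<in>{p+1..p+s}. ?f i)"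
      by (rule sum.union_disjoint) auto
    have e3: "(\<Sum>i\<in>{p+1..p+s}. ?f i) = 0"
    proof (rule sum.neutral, rule ballI)
      fix i assume "i \<in> {p+1..p+s}"
      then have "gamma w2 (p+s) k2 i j = 0" using g0 j by blast
      then show "?f i = 0" by (simp add: mk_def)
    qed
    have e4: "(\<Sum>i\<in>{1..p} - I. ?f i) = (\<Sum>i\<in>{1..p} - I. of_rat (mk u p k i j) *\<^sub>R u i)"
    proof (rule sum.cong)
      fix i assume "i \<in> {1..p} - I"
      then have i: "i \<in> {1..p}" by blast
      show "?f i = of_rat (mk u p k i j) *\<^sub>R u i"
        unfolding mk_def NkE gE[OF i] hw[OF i] ..
    qed simp
    have e5: "(\<Sum>i\<in>{1..p+s} - Ik w2 (p+s) k2. ?f i) = (\<Sum>i\<in>{1..p} - I. of_rat (mk u p k i j) *\<^sub>R u i)"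
      by (simp only: e1 e2 e3 e4 add_0_right)
    have "wprime w2 (p+s) k2 j = real (Nk w2 (p+s) k2) *\<^sub>R w2 j + (\<Sum>i\<in>{1..p+s} - Ik w2 (p+s) k2. ?f i)"
      unfolding wprime_def ..
    also have "\<dots> = real (Nk u p k) *\<^sub>R u j + (\<Sum>i\<in>{1..p} - I. of_rat (mk u p k i j) *\<^sub>R u i)"
      unfolding e5 NkE hw[OF jp] ..
    also have "\<dots> = wprime u p k j" unfolding wprime_def I_def ..
    finally show ?thesis .
  qed
  then show ?thesis using IkE unfolding I_def by blast
qed



lemma coeff_unique:
  fixes f :: "nat \<Rightarrow> 'a::euclidean_space"
  assumes fin: "finite J" and inj: "inj_on f J" and ind: "independent (f ` J)"
    and eq: "(\<Sum>j\<in>J. a j *\<^sub>R f j) = (\<Sum>j\<in>J. a' j *\<^sub>R f j)" and j: "j \<in> J"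
  shows "a j = a' j"
proof -
  have z: "(\<Sum>j\<in>J. (a j - a' j) *\<^sub>R f j) = 0"
    using eq by (simp add: scaleR_diff_left sum_subtractf)
  define c where "c = (\<lambda>v. a (inv_into J f v) - a' (inv_into J f v))"
  have "(\<Sum>v\<in>f ` J. c v *\<^sub>R v) = (\<Sum>j\<in>J. c (f j) *\<^sub>R f j)"
    by (simp add: sum.reindex[OF inj])
  also have "\<dots> = (\<Sum>j\<in>J. (a j - a' j) *\<^sub>R f j)"
    by (rule sum.cong) (simp_all add: c_def inv_into_f_f[OF inj])
  finally have "(\<Sum>v\<in>f ` J. c v *\<^sub>R v) = 0" using z by simp
  then have "c (f j) = 0" using ind j unfolding independent_explicit by blast
  then show ?thesis by (simp add: c_def inv_into_f_f[OF inj j])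
qed

lemma span_repr:
  fixes f :: "nat \<Rightarrow> 'a::euclidean_space"
  assumes fin: "finite J" and inj: "inj_on f J" and x: "x \<in> span (f ` J)"
  shows "\<exists>a. x = (\<Sum>j\<in>J. a j *\<^sub>R f j)"
proof -
  from x obtain c where "x = (\<Sum>v\<in>f ` J. c v *\<^sub>R v)"
    using span_finite[of "f ` J"] fin by auto
  also have "\<dots> = (\<Sum>j\<in>J. c (f j) *\<^sub>R f j)" by (simp add: sum.reindex[OF inj])
  finally show ?thesis by (intro exI[of _ "\<lambda>j. c (f j)"])
qed

lemma zgen_mem:
  assumes "i \<in> {1..m}" shows "w i \<in> zgen w m"
proof -
  define c :: "nat \<Rightarrow> int" where "c = (\<lambda>k. if k = i then 1 else 0)"
  have "(\<Sum>k\<in>{1..m}. of_int (c k) *\<^sub>R w k) = (\<Sum>k\<in>{1..m}. if k = i then w i else 0)"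
    by (rule sum.cong) (auto simp: c_def)
  also have "\<dots> = w i" using assms by simp
  finally have e: "(\<Sum>k\<in>{1..m}. of_int (c k) *\<^sub>R w k) = w i" .
  show ?thesis unfolding zgen_def using e[symmetric] by (intro CollectI exI[of _ c]) (rule conjI, assumption, rule TrueI)
qed

lemma zgen_span: "zgen w m \<subseteq> span (w ` {1..m})"
proof
  fix x assume "x \<in> zgen w m"
  then obtain c :: "nat \<Rightarrow> int" where x: "x = (\<Sum>k\<in>{1..m}. of_int (c k) *\<^sub>R w k)"
    unfolding zgen_def by blast
  show "x \<in> span (w ` {1..m})" unfolding x
    by (intro span_sum span_scale span_base) auto
qed

lemma zgen_zero: "0 \<in> zgen w m"
proof -
  have "(\<Sum>k\<in>{1..m}. of_int ((\<lambda>_. 0::int) k) *\<^sub>R w k) = 0" by simp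
  then show ?thesis unfolding zgen_def by (intro CollectI exI[of _ "\<lambda>_. 0::int"]) simp
qed

theorem lemma3p2:
  fixes u v :: "nat \<Rightarrow> real ^ 'n" and m p :: nat
  assumes "p \<le> m" and "m < CARD('n)"
    and "inj_on u {1..p}" and "independent (u ` {1..p})"
    and "span (u ` {1..p}) = span (zgen u m)"
    and "inj_on (\<lambda>i. if i \<le> p then u i else v i) {1..CARD('n)}"
    and "independent ((\<lambda>i. if i \<le> p then u i else v i) ` {1..CARD('n)})"
    and "span ((\<lambda>i. if i \<le> p then u i else v i) ` {1..CARD('n)}) = UNIV"
  shows "\<forall>r. 1 \<le> r \<and> r \<le> CARD('n) - m \<longrightarrow>
     (let H = zgen u m;
          H' = setplus H (zgen (\<lambda>k. v (p + k)) r);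
          w' = (\<lambda>i. if i \<le> p then u i else if i \<le> p + r then v i else u (i - r))
      in L_M u m = L_M w' (m + r) \<and>
         Re (cdim (closure H)) = Re (cdim (closure H')))"
proof (intro allI impI)
  fix r assume r: "1 \<le> r \<and> r \<le> CARD('n) - m"
  define n where "n = CARD('n)"
  define b where "b = (\<lambda>i. if i \<le> p then u i else v i)"
  have binj: "inj_on b {1..n}" using assms(6) unfolding b_def n_def .
  have bind: "independent (b ` {1..n})" using assms(7) unfolding b_def n_def .
  have rn: "m + r \<le> n" using r assms(2) unfolding n_def by linarith
  have bu: "b j = u j" if "j \<le> p" for j using that by (simp add: b_def)
  have bv: "b j = v j" if "p < j" for j using that by (simp add: b_def)
  have ub: "u ` {1..p} = b ` {1..p}" using bu by (intro image_cong) auto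
  have spanU: "span (u ` {1..m}) = span (u ` {1..p})"
  proof
    have "u ` {1..m} \<subseteq> zgen u m" using zgen_mem by blast
    then have "span (u ` {1..m}) \<subseteq> span (zgen u m)" by (rule span_mono)
    then show "span (u ` {1..m}) \<subseteq> span (u ` {1..p})" using assms(5) by simp
    show "span (u ` {1..p}) \<subseteq> span (u ` {1..m})" using assms(1) by (intro span_mono image_mono) auto
  qed
  have uk_span: "u k \<in> span (u ` {1..p})" if "k \<in> {1..m}" for k
    using that spanU span_base[of "u k" "u ` {1..m}"] by auto
  have gq1: "gen_q u m = p"
    unfolding gen_q_def spanU dim_span dim_eq_card_independent[OF assms(4)]
    using card_image[OF assms(3)] by simp
  define w' where "w' = (\<lambda>i. if i \<le> p then u i else if i \<le> p + r then v i else u (i - r))"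
  have w'b: "w' j = b j" if "j \<le> p + r" for j using that by (simp add: w'_def b_def)
  have w'u: "w' (k + r) = u k" if "k \<in> {p+1..m}" for k using that by (simp add: w'_def)
  have hw: "w' j = u j" if "j \<in> {1..p}" for j using that by (simp add: w'_def)
  have sub: "{1..p+r} \<subseteq> {1..n}" using rn assms(1) by auto
  have w'img: "w' ` {1..p+r} = b ` {1..p+r}" using w'b by (intro image_cong) auto
  have w'inj: "inj_on w' {1..p+r}"
    using inj_on_subset[OF binj sub] w'b by (subst inj_on_cong) auto
  have w'ind: "independent (w' ` {1..p+r})"
    unfolding w'img using bind by (rule independent_mono) (use sub in auto)
  have gq2: "gen_q w' (m + r) = p + r"
  proof -
    have s1: "w' ` {1..m+r} \<subseteq> span (w' ` {1..p+r})"
    proof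
      fix x assume "x \<in> w' ` {1..m+r}"
      then obtain i where i: "i \<in> {1..m+r}" and x: "x = w' i" by blast
      show "x \<in> span (w' ` {1..p+r})"
      proof (cases "i \<le> p + r")
        case True then show ?thesis using i x by (intro span_base) auto
      next
        case False
        then have "x = u (i - r)" using x by (simp add: w'_def)
        moreover have "i - r \<in> {1..m}" using i False by auto
        then have "u (i - r) \<in> span (u ` {1..p})" by (rule uk_span)
        moreover have "span (u ` {1..p}) \<subseteq> span (w' ` {1..p+r})"
          using hw by (intro span_mono) force
        ultimately show ?thesis by blast
      qed
    qed
    have "span (w' ` {1..m+r}) = span (w' ` {1..p+r})"
    proof
      show "span (w' ` {1..m+r}) \<subseteq> span (w' ` {1..p+r})"
        using s1 by (metis span_mono span_span)
      show "span (w' ` {1..p+r}) \<subseteq> span (w' ` {1..m+r})"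
        using assms(1) by (intro span_mono image_mono) auto
    qed
    then have "gen_q w' (m + r) = dim (span (w' ` {1..p+r}))" unfolding gen_q_def by simp
    also have "\<dots> = card (w' ` {1..p+r})" unfolding dim_span by (rule dim_eq_card_independent[OF w'ind])
    also have "\<dots> = p + r" using card_image[OF w'inj] by simp
    finally show ?thesis .
  qed
  have alpha_rel: "alpha w' (p+r) (k+r) j = (if j \<le> p then alpha u p k j else 0)"
    if k: "k \<in> {p+1..m}" and j: "j \<in> {1..p+r}" for k j
  proof -
    have "\<exists>a. u k = (\<Sum>j\<in>{1..p}. a j *\<^sub>R u j)"
      using span_repr[OF _ assms(3) uk_span] k by auto
    then have hu: "u k = (\<Sum>j\<in>{1..p}. alpha u p k j *\<^sub>R u j)"
      unfolding alpha_def by (rule someI_ex)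
    define a' where "a' = (\<lambda>j. if j \<le> p then alpha u p k j else 0)"
    have "(\<Sum>j\<in>{1..p+r}. a' j *\<^sub>R w' j) = (\<Sum>j\<in>{1..p} \<union> {p+1..p+r}. a' j *\<^sub>R w' j)"
      by (rule sum.cong) auto
    also have "\<dots> = (\<Sum>j\<in>{1..p}. a' j *\<^sub>R w' j) + (\<Sum>j\<in>{p+1..p+r}. a' j *\<^sub>R w' j)"
      by (rule sum.union_disjoint) auto
    also have "(\<Sum>j\<in>{p+1..p+r}. a' j *\<^sub>R w' j) = 0"
      by (rule sum.neutral) (auto simp: a'_def)
    also have "(\<Sum>j\<in>{1..p}. a' j *\<^sub>R w' j) = (\<Sum>j\<in>{1..p}. alpha u p k j *\<^sub>R u j)"
      by (rule sum.cong) (auto simp: a'_def hw)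
    finally have ea: "(\<Sum>j\<in>{1..p+r}. a' j *\<^sub>R w' j) = u k" using hu by simp
    then have "\<exists>a. w' (k + r) = (\<Sum>j\<in>{1..p+r}. a j *\<^sub>R w' j)" using w'u[OF k] by metis
    then have hw': "w' (k + r) = (\<Sum>j\<in>{1..p+r}. alpha w' (p+r) (k+r) j *\<^sub>R w' j)"
      unfolding alpha_def by (rule someI_ex)
    have "alpha w' (p+r) (k+r) j = a' j"
    proof (rule coeff_unique[OF _ w'inj w'ind _ j])
      show "(\<Sum>j\<in>{1..p+r}. alpha w' (p+r) (k+r) j *\<^sub>R w' j) = (\<Sum>j\<in>{1..p+r}. a' j *\<^sub>R w' j)"
        using hw' ea w'u[OF k] by metis
    qed simp
    then show ?thesis by (simp add: a'_def)
  qed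
  have tr: "Ik w' (p+r) (k+r) = Ik u p k \<and> (\<forall>j\<in>Ik u p k. wprime w' (p+r) (k+r) j = wprime u p k j)"
    if k: "k \<in> {p+1..m}" for k
  proof (rule k_transfer)
    fix j assume "j \<in> {1..p+r}"
    then show "alpha w' (p+r) (k+r) j = (if j \<le> p then alpha u p k j else 0)" by (rule alpha_rel[OF k])
  next
    fix j assume "j \<in> {1..p}"
    then show "w' j = u j" by (rule hw)
  qed
  have Mc: "M_cols w' (m + r) = M_cols u m"
  proof -
    have "{wprime w' (p+r) k j | k j. k \<in> {p+r+1..m+r} \<and> j \<in> Ik w' (p+r) k}
        = {wprime u p k j | k j. k \<in> {p+1..m} \<and> j \<in> Ik u p k}"
    proof (intro equalityI subsetI)
      fix x assume "x \<in> {wprime w' (p+r) k j | k j. k \<in> {p+r+1..m+r} \<and> j \<in> Ik w' (p+r) k}"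
      then obtain k j where k: "k \<in> {p+r+1..m+r}" and j: "j \<in> Ik w' (p+r) k" and x: "x = wprime w' (p+r) k j"
        by blast
      define k0 where "k0 = k - r"
      have k0: "k0 \<in> {p+1..m}" and kk: "k = k0 + r" using k by (auto simp: k0_def)
      have "j \<in> Ik u p k0" "x = wprime u p k0 j" using tr[OF k0] j x unfolding kk by auto
      then show "x \<in> {wprime u p k j | k j. k \<in> {p+1..m} \<and> j \<in> Ik u p k}" using k0 by blast
    next
      fix x assume "x \<in> {wprime u p k j | k j. k \<in> {p+1..m} \<and> j \<in> Ik u p k}"
      then obtain k j where k: "k \<in> {p+1..m}" and j: "j \<in> Ik u p k" and x: "x = wprime u p k j"
        by blast
      have "j \<in> Ik w' (p+r) (k + r)" "x = wprime w' (p+r) (k+r) j" using tr[OF k] j x by auto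
      moreover have "k + r \<in> {p+r+1..m+r}" using k by auto
      ultimately show "x \<in> {wprime w' (p+r) k j | k j. k \<in> {p+r+1..m+r} \<and> j \<in> Ik w' (p+r) k}" by blast
    qed
    then show ?thesis unfolding M_cols_def Let_def gq1 gq2 by simp
  qed
  have P1: "L_M u m = L_M w' (m + r)" unfolding L_M_def Mc ..
  define H where "H = zgen u m"
  define H' where "H' = setplus H (zgen (\<lambda>k. v (p + k)) r)"
  have "\<forall>k. \<exists>g. linear g \<and> (\<forall>x\<in>b ` {1..n}. g x = (if x = b (p+k) then 1 else (0::real)))"
  proof
    fix k show "\<exists>g. linear g \<and> (\<forall>x\<in>b ` {1..n}. g x = (if x = b (p+k) then 1 else (0::real)))"
      by (rule linear_independent_extend[OF bind])
  qed
  from choice[OF this] obtain F where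
    FF: "\<forall>k. linear (F k) \<and> (\<forall>x\<in>b ` {1..n}. F k x = (if x = b (p+k) then 1 else (0::real)))"
    by blast
  have F: "\<And>k. linear (F k)" using FF by blast
  have Fb: "\<And>k x. x \<in> b ` {1..n} \<Longrightarrow> F k x = (if x = b (p+k) then 1 else 0)" using FF by blast
  have Fbl: "bounded_linear (F k)" for k using F linear_conv_bounded_linear by blast
  have HS: "H \<subseteq> span (u ` {1..p})" unfolding H_def assms(5) using span_superset by blast
  have F0: "F k h = 0" if k: "k \<in> {1..r}" and h: "h \<in> span (u ` {1..p})" for k h
  proof (rule linear_eq_0_on_span[OF F _ h])
    fix x assume "x \<in> u ` {1..p}"
    then obtain j where j: "j \<in> {1..p}" and x: "x = u j" by blast
    have "b j \<noteq> b (p + k)"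
    proof
      assume "b j = b (p + k)"
      moreover have "j \<in> {1..n}" "p + k \<in> {1..n}" using j k rn assms(1) by auto
      ultimately have "j = p + k" using inj_onD[OF binj] by blast
      then show False using j k by auto
    qed
    moreover have "b j \<in> b ` {1..n}" using j rn assms(1) by auto
    ultimately have "F k (b j) = 0" using Fb[of "b j" k] by simp
    then show "F k x = 0" using x bu[of j] j by simp
  qed
  have Fv: "F k (v (p + k')) = (if k = k' then 1 else 0)" if k: "k \<in> {1..r}" and k': "k' \<in> {1..r}" for k k'
  proof -
    have bk': "b (p + k') = v (p + k')" using k' by (simp add: b_def)
    have "p + k' \<in> {1..n}" using k' rn assms(1) by auto
    then have "b (p + k') \<in> b ` {1..n}" by (rule imageI)
    then have "F k (v (p + k')) = (if b (p + k') = b (p + k) then 1 else 0)" using Fb bk' by metis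
    moreover have "b (p + k') = b (p + k) \<longleftrightarrow> k = k'"
    proof
      assume e: "b (p + k') = b (p + k)"
      have "p + k' \<in> {1..n}" "p + k \<in> {1..n}" using k k' rn assms(1) by auto
      then have "p + k' = p + k" using inj_onD[OF binj e] by blast
      then show "k = k'" by simp
    qed simp
    ultimately show ?thesis by simp
  qed
  have H'form: "\<exists>h c. h \<in> H \<and> x = h + (\<Sum>k\<in>{1..r}. of_int (c k) *\<^sub>R v (p + k))" if "x \<in> H'" for x
    using that unfolding H'_def setplus_def zgen_def by blast
  have Fsum: "F k (h + (\<Sum>k'\<in>{1..r}. of_int (c k') *\<^sub>R v (p + k'))) = of_int (c k)"
    if k: "k \<in> {1..r}" and h: "h \<in> H" for k h and c :: "nat \<Rightarrow> int"
  proof -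
    have "F k (h + (\<Sum>k'\<in>{1..r}. of_int (c k') *\<^sub>R v (p + k')))
        = F k h + (\<Sum>k'\<in>{1..r}. of_int (c k') * F k (v (p + k')))"
      by (simp add: linear_add[OF F] linear_sum[OF F] linear_scale[OF F])
    also have "F k h = 0" using F0[OF k] h HS by blast
    also have "(\<Sum>k'\<in>{1..r}. of_int (c k') * F k (v (p + k'))) = (\<Sum>k'\<in>{1..r}. if k' = k then of_int (c k) else 0)"
    proof (rule sum.cong[OF refl])
      fix k' assume "k' \<in> {1..r}"
      then show "of_int (c k') * F k (v (p + k')) = (if k' = k then of_int (c k) else 0)"
        using Fv[OF k] by auto
    qed
    also have "(\<Sum>k'\<in>{1..r}. if k' = k then of_int (c k) else 0) = (of_int (c k) :: real)" using k by simp
    finally show ?thesis by simp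
  qed
  define G where "G = (\<lambda>x. x - (\<Sum>k\<in>{1..r}. F k x *\<^sub>R v (p + k)))"
  have Glin: "linear G"
    unfolding G_def
  proof (rule linearI)
    fix x y :: "real ^ 'n"
    show "x + y - (\<Sum>k\<in>{1..r}. F k (x + y) *\<^sub>R v (p + k)) =
      x - (\<Sum>k\<in>{1..r}. F k x *\<^sub>R v (p + k)) + (y - (\<Sum>k\<in>{1..r}. F k y *\<^sub>R v (p + k)))"
      by (simp add: linear_add[OF F] scaleR_add_left sum.distrib algebra_simps)
  next
    fix c :: real and x :: "real ^ 'n"
    show "c *\<^sub>R x - (\<Sum>k\<in>{1..r}. F k (c *\<^sub>R x) *\<^sub>R v (p + k)) =
      c *\<^sub>R (x - (\<Sum>k\<in>{1..r}. F k x *\<^sub>R v (p + k)))"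
      by (simp add: linear_scale[OF F] scaleR_diff_right scaleR_sum_right)
  qed
  have GH: "G x \<in> H" if xH: "x \<in> H'" for x
  proof -
    obtain h c where h: "h \<in> H" and x: "x = h + (\<Sum>k\<in>{1..r}. of_int (c k) *\<^sub>R v (p + k))"
      using H'form[OF xH] by blast
    have "(\<Sum>k\<in>{1..r}. F k x *\<^sub>R v (p + k)) = (\<Sum>k\<in>{1..r}. of_int (c k) *\<^sub>R v (p + k))"
    proof (rule sum.cong[OF refl])
      fix k assume k: "k \<in> {1..r}"
      show "F k x *\<^sub>R v (p + k) = of_int (c k) *\<^sub>R v (p + k)"
        unfolding x Fsum[OF k h] ..
    qed
    then show ?thesis using h x by (simp add: G_def)
  qed
  have clF: "closure H' \<subseteq> F k -` \<int>" if True: "k \<in> {1..r}" for k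
  proof -
    show ?thesis
    proof (rule closure_minimal)
      show "H' \<subseteq> F k -` \<int>"
      proof
        fix x assume xH: "x \<in> H'"
        obtain h c where h: "h \<in> H" and x: "x = h + (\<Sum>k\<in>{1..r}. of_int (c k) *\<^sub>R v (p + k))"
          using H'form[OF xH] by blast
        show "x \<in> F k -` \<int>" using Fsum[OF True h, of c] x by simp
      qed
      show "closed (F k -` \<int>)"
        by (rule continuous_closed_vimage) (simp_all add: linear_continuous_at[OF Fbl])
    qed
  qed
  have Gbl: "bounded_linear G" using Glin linear_conv_bounded_linear by blast
  have clG: "closure H' \<subseteq> G -` closure H"
  proof (rule closure_minimal)
    show "H' \<subseteq> G -` closure H" using GH closure_subset by blast
    show "closed (G -` closure H)"
      by (rule continuous_closed_vimage) (simp_all add: linear_continuous_at[OF Gbl])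
  qed
  have HH': "H \<subseteq> H'"
  proof
    fix x assume "x \<in> H"
    moreover have "(0::real^'n) \<in> zgen (\<lambda>k. v (p + k)) r" by (rule zgen_zero)
    ultimately show "x \<in> H'" unfolding H'_def setplus_def by force
  qed
  have key: "V \<subseteq> closure H" if V: "subspace V" "V \<subseteq> closure H'" for V
  proof
    fix x assume x: "x \<in> V"
    have Fz: "F k x = 0" if k: "k \<in> {1..r}" for k
    proof (rule ccontr)
      assume nz: "F k x \<noteq> 0"
      define t where "t = 1 / (2 * F k x)"
      have "t *\<^sub>R x \<in> V" using V(1) x by (rule subspace_mul)
      then have "F k (t *\<^sub>R x) \<in> \<int>" using clF[OF k] V(2) by blast
      moreover have "F k (t *\<^sub>R x) = 1 / 2" using nz by (simp add: linear_scale[OF F] t_def)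
      ultimately have "(1/2::real) \<in> \<int>" by simp
      then obtain z :: int where z: "(1/2::real) = of_int z" by (auto elim: Ints_cases)
      show False
      proof (cases "z \<le> 0")
        case True then have "real_of_int z \<le> 0" by simp
        then show False using z by linarith
      next
        case False then have "real_of_int z \<ge> 1" by simp
        then show False using z by linarith
      qed
    qed
    have "G x = x"
    proof -
      have "(\<Sum>k\<in>{1..r}. F k x *\<^sub>R v (p + k)) = 0"
        by (rule sum.neutral) (simp add: Fz)
      then show ?thesis by (simp add: G_def)
    qed
    moreover have "G x \<in> closure H" using clG V(2) x by blast
    ultimately show "x \<in> closure H" by simp
  qed
  have setsEq: "(\<lambda>d. \<exists>V. subspace V \<and> V \<subseteq> closure H \<and> dim V = d) = (\<lambda>d. \<exists>V. subspace V \<and> V \<subseteq> closure H' \<and> dim V = d)"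
  proof (intro ext iffI)
    fix d assume "\<exists>V. subspace V \<and> V \<subseteq> closure H \<and> dim V = d"
    then show "\<exists>V. subspace V \<and> V \<subseteq> closure H' \<and> dim V = d" using closure_mono[OF HH'] by blast
  next
    fix d assume "\<exists>V. subspace V \<and> V \<subseteq> closure H' \<and> dim V = d"
    then show "\<exists>V. subspace V \<and> V \<subseteq> closure H \<and> dim V = d" using key by blast
  qed
  have P2: "Re (cdim (closure H)) = Re (cdim (closure H'))"
    unfolding cdim_def Let_def setsEq by simp
  show "let H = zgen u m;
          H' = setplus H (zgen (\<lambda>k. v (p + k)) r);
          w' = (\<lambda>i. if i \<le> p then u i else if i \<le> p + r then v i else u (i - r))
      in L_M u m = L_M w' (m + r) \<and>
         Re (cdim (closure H)) = Re (cdim (closure H'))"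
    using P1 P2 unfolding Let_def w'_def H'_def H_def by simp
qed


end
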